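(* Let $D$ be a square-free integer, $p$ an odd prime, $k,\ell$ positive integers and $c_D$ a positive integer with $\gcd(c_D k, p) = 1$. Let $N = c_D k p^{\ell} - 1$ be an odd integer such that $c_D k < p^{\ell}$ and the Jacobi symbol satisfies $\left(\frac{D}{N}\right) = -1$. Suppose that there exists an element $w \in \mathcal{G}_N(D)$ such that $w^{\frac{N+1}{p}} \not\equiv 1 \pmod{N}$. Then $N$ is prime if and only if $$\Phi_p\left(w^{\frac{N+1}{p}}\right) \equiv 0 \pmod{N},$$ where $\Phi_p(x)$ denotes the $p$-th cyclotomic polynomial.
   Context: For an integer $n \ge 2$ and a square-free integer $D$: if $D \equiv 2,3 \pmod 4$, let $\mathcal{I}_n(D) = \{a + b\sqrt{D} : a,b \in \mathbb{Z}/n\mathbb{Z}\}$ (the ring $\mathbb{Z}[\sqrt D]/n\mathbb{Z}[\sqrt D]$) and $\mathcal{G}_n(D) = \{a + b\sqrt{D} \in \mathcal{I}_n(D) : a^2 - Db^2 \equiv 1 \pmod n\}$; if $D \equiv 1 \pmod 4$, let $\omega = \frac{1+\sqrt D}{2}$, $\mathcal{I}_n(D) = \{a + b\omega : a,b \in \mathbb{Z}/n\mathbb{Z}\}$ (the ring $\mathbb{Z}[\omega]/n\mathbb{Z}[\omega]$) and $\mathcal{G}_n(D) = \{a + b\omega \in \mathcal{I}_n(D) : a^2 + ab + \frac{1-D}{4} b^2 \equiv 1 \pmod n\}$. In both cases $\mathcal{I}_n(D)$ is the quotient ring $\mathcal{O}_L/n\mathcal{O}_L$ for $L=\mathbb{Q}(\sqrt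 D)$, $\mathcal{G}_n(D)$ is a multiplicative group, powers are computed in $\mathcal{I}_n(D)$, and a congruence $x \equiv y \pmod n$ for $x,y \in \mathcal{I}_n(D)$ means $x = y$ in $\mathcal{I}_n(D)$; polynomials such as $\Phi_p$ are evaluated in $\mathcal{I}_n(D)$. *)

theory Defs
  imports "HOL-Number_Theory.Number_Theory" "HOL-Computational_Algebra.Squarefree"
begin

text \<open>Elements of I_n(D) = O_L / n O_L are represented by integer pairs (a,b),
standing for a + b*sqrt D (if D mod 4 is 2 or 3) or a + b*omega, omega = (1+sqrt D)/2
(if D mod 4 = 1).\<close>

type_synonym qelt = "int \<times> int"

definition qeq :: "int \<Rightarrow> qelt \<Rightarrow> qelt \<Rightarrow> bool" where
  "qeq n x y \<longleftrightarrow> [fst x = fst y] (mod n) \<and> [snd x = snd y] (mod n)"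

definition qone :: qelt where "qone = (1, 0)"
definition qzero :: qelt where "qzero = (0, 0)"

definition qadd :: "int \<Rightarrow> qelt \<Rightarrow> qelt \<Rightarrow> qelt" where
  "qadd n x y = ((fst x + fst y) mod n, (snd x + snd y) mod n)"

text \<open>Multiplication: (sqrt D)^2 = D, resp. omega^2 = omega + (D-1)/4.\<close>
definition qmul :: "int \<Rightarrow> int \<Rightarrow> qelt \<Rightarrow> qelt \<Rightarrow> qelt" where
  "qmul D n x y =
     (let (a, b) = x; (c, d) = y in
      if D mod 4 = 1
      then ((a * c + b * d * ((D - 1) div 4)) mod n, (a * d + b * c + b * d) mod n)
      else ((a * c + D * b * d) mod n, (a * d + b * c) mod n))"

fun qpow :: "int \<Rightarrow> int \<Rightarrow> qelt \<Rightarrow> nat \<Rightarrow> qelt" where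
  "qpow D n x 0 = (1 mod n, 0)"
| "qpow D n x (Suc e) = qmul D n x (qpow D n x e)"

definition qnorm :: "int \<Rightarrow> qelt \<Rightarrow> int" where
  "qnorm D x = (let (a, b) = x in
     if D mod 4 = 1 then a^2 + a * b + ((1 - D) div 4) * b^2 else a^2 - D * b^2)"

definition inG :: "int \<Rightarrow> int \<Rightarrow> qelt \<Rightarrow> bool" where
  "inG D n x \<longleftrightarrow> [qnorm D x = 1] (mod n)"

definition cyclo_prime_eval :: "int \<Rightarrow> int \<Rightarrow> nat \<Rightarrow> qelt \<Rightarrow> qelt" where
  "cyclo_prime_eval D n p x = foldr (qadd n) (map (qpow D n x) [0..<p]) (0, 0)"

definition Jacobi :: "int \<Rightarrow> nat \<Rightarrow> int" where
  "Jacobi a n = prod_mset (image_mset (\<lambda>q. Legendre a (int q)) (prime_factorization n))"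

end

theory Submission
  imports Defs "HOL-Computational_Algebra.Polynomial"
begin

definition Inn :: "int \<Rightarrow> int poly \<Rightarrow> int poly \<Rightarrow> bool" where
  "Inn n m z \<longleftrightarrow> (\<exists>u v. z = smult n u + m * v)"

definition cg :: "int \<Rightarrow> int poly \<Rightarrow> int poly \<Rightarrow> int poly \<Rightarrow> bool" where
  "cg n m f g \<longleftrightarrow> Inn n m (f - g)"

lemma Inn_0[simp]: "Inn n m 0"
  unfolding Inn_def by (rule exI[of _ 0], rule exI[of _ 0]) simp

lemma Inn_add: "Inn n m x \<Longrightarrow> Inn n m y \<Longrightarrow> Inn n m (x + y)"
proof -
  assume "Inn n m x" "Inn n m y"
  then obtain u v u' v' where "x = smult n u + m * v" "y = smult n u' + m * v'"
    unfolding Inn_def by blast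
  then have "x + y = smult n (u + u') + m * (v + v')" by (simp add: algebra_simps smult_add_right)
  then show ?thesis unfolding Inn_def by blast
qed

lemma Inn_mult: "Inn n m x \<Longrightarrow> Inn n m (a * x)"
proof -
  assume "Inn n m x"
  then obtain u v where "x = smult n u + m * v" unfolding Inn_def by blast
  then have "a * x = smult n (a * u) + m * (a * v)" by (simp add: algebra_simps)
  then show ?thesis unfolding Inn_def by blast
qed

lemma Inn_mult2: "Inn n m x \<Longrightarrow> Inn n m (x * a)"
  using Inn_mult by (metis mult.commute)

lemma Inn_uminus: "Inn n m x \<Longrightarrow> Inn n m (- x)"
  using Inn_mult[of n m x "-1"] by simp

lemma Inn_diff: "Inn n m x \<Longrightarrow> Inn n m y \<Longrightarrow> Inn n m (x - y)"
  using Inn_add Inn_uminus by (metis diff_conv_add_uminus)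

lemma Inn_smult: "Inn n m x \<Longrightarrow> Inn n m (smult c x)"
  using Inn_mult[of n m x "[:c:]"] by simp

lemma Inn_n: "Inn n m (smult n f)"
  unfolding Inn_def by (rule exI[of _ f], rule exI[of _ 0]) simp

lemma Inn_m: "Inn n m (m * f)"
  unfolding Inn_def by (rule exI[of _ 0], rule exI[of _ f]) simp

lemma Inn_const: "n dvd c \<Longrightarrow> Inn n m [:c:]"
  by (metis Inn_n dvd_def mult.commute smult_pCons smult_0_right)

lemma Inn_dvd: "Inn N m x \<Longrightarrow> q dvd N \<Longrightarrow> Inn q m x"
  unfolding Inn_def
  apply (elim exE dvdE)
  subgoal for u v k by (rule exI[of _ "smult k u"], rule exI[of _ v]) simp
  done

lemma Inn_sum: "(\<And>i. i \<in> A \<Longrightarrow> Inn n m (f i)) \<Longrightarrow> Inn n m (sum f A)"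
  by (induction A rule: infinite_finite_induct) (auto intro: Inn_add)

lemma cg_refl[simp]: "cg n m f f" by (simp add: cg_def)
lemma cg_sym: "cg n m f g \<Longrightarrow> cg n m g f"
  unfolding cg_def using Inn_uminus by fastforce
lemma cg_trans: "cg n m f g \<Longrightarrow> cg n m g h \<Longrightarrow> cg n m f h"
  unfolding cg_def using Inn_add by fastforce
lemma cg_add: "cg n m f g \<Longrightarrow> cg n m f' g' \<Longrightarrow> cg n m (f + f') (g + g')"
  unfolding cg_def using Inn_add by (fastforce simp: algebra_simps)
lemma cg_diff: "cg n m f g \<Longrightarrow> cg n m f' g' \<Longrightarrow> cg n m (f - f') (g - g')"
  unfolding cg_def using Inn_diff by (fastforce simp: algebra_simps)
lemma cg_mult: "cg n m f g \<Longrightarrow> cg n m f' g' \<Longrightarrow> cg n m (f * f') (g * g')"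
proof -
  assume a: "cg n m f g" "cg n m f' g'"
  have "f * f' - g * g' = f * (f' - g') + (f - g) * g'" by (simp add: algebra_simps)
  then show ?thesis using a unfolding cg_def by (metis Inn_add Inn_mult Inn_mult2)
qed
lemma cg_power: "cg n m f g \<Longrightarrow> cg n m (f ^ k) (g ^ k)"
  by (induction k) (auto intro: cg_mult)
lemma cg_smult: "cg n m f g \<Longrightarrow> cg n m (smult c f) (smult c g)"
  unfolding cg_def using Inn_smult by (metis smult_diff_right)
lemma cg_sum: "(\<And>i. i \<in> A \<Longrightarrow> cg n m (f i) (g i)) \<Longrightarrow> cg n m (sum f A) (sum g A)"
  by (induction A rule: infinite_finite_induct) (auto intro: cg_add)
lemma cg_dvd: "cg N m f g \<Longrightarrow> q dvd N \<Longrightarrow> cg q m f g"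
  unfolding cg_def using Inn_dvd by blast
lemma cg_const: "[a = b] (mod n) \<Longrightarrow> cg n m [:a:] [:b:]"
  unfolding cg_def by (metis Inn_const cong_iff_dvd_diff diff_pCons diff_0_right pCons_0_0)

lemma coeff_lemma:
  fixes n :: int
  assumes n: "n > 0" and I: "Inn n [:c0, c1, 1:] [:a, b:]"
  shows "n dvd a \<and> n dvd b"
proof -
  define m where "m = [:c0, c1, 1:]"
  obtain u v where e: "[:a,b:] = smult n u + m * v" using I unfolding Inn_def m_def by blast
  define v1 where "v1 = map_poly (\<lambda>c. c div n) v"
  define v2 where "v2 = map_poly (\<lambda>c. c mod n) v"
  have vv: "v = smult n v1 + v2"
    by (rule poly_eqI) (simp add: v1_def v2_def coeff_map_poly)
  have e2: "[:a,b:] = smult n (u + m * v1) + m * v2"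
    using e vv by (simp add: algebra_simps smult_add_right)
  have dm: "degree m = 2" "lead_coeff m = 1" by (simp_all add: m_def)
  have "v2 = 0"
  proof (rule ccontr)
    assume nz: "v2 \<noteq> 0"
    define d where "d = degree m + degree v2"
    have c1: "coeff (m * v2) d = lead_coeff v2"
      unfolding d_def using coeff_mult_degree_sum[of m v2] dm by simp
    have "coeff [:a,b:] d = 0" using dm unfolding d_def by (simp add: coeff_pCons split: nat.split)
    then have "0 = n * coeff (u + m * v1) d + lead_coeff v2"
      using arg_cong[OF e2, of "\<lambda>p. coeff p d"] c1 by simp
    then have "n dvd lead_coeff v2" by (metis add.commute add_0_iff dvd_triv_left dvd_minus_iff minus_unique)
    moreover have "lead_coeff v2 = coeff v (degree v2) mod n" by (simp add: v2_def coeff_map_poly)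
    moreover have "lead_coeff v2 \<noteq> 0" using nz by simp
    ultimately show False using n
      by (metis dvd_imp_mod_0 mod_mod_trivial)
  qed
  then have "[:a,b:] = smult n (u + m * v1)" using e2 by simp
  then have "a = n * coeff (u + m * v1) 0" "b = n * coeff (u + m * v1) 1"
    using arg_cong[of _ _ "\<lambda>p. coeff p 0"] arg_cong[of _ _ "\<lambda>p. coeff p 1"] by (metis coeff_pCons_0 coeff_smult, metis coeff_pCons_Suc coeff_pCons_0 coeff_smult One_nat_def)
  then show ?thesis by simp
qed

definition sD :: "int \<Rightarrow> int" where "sD D = (if D mod 4 = 1 then 1 else 0)"
definition tD :: "int \<Rightarrow> int" where "tD D = (if D mod 4 = 1 then (D - 1) div 4 else D)"
definition mD :: "int \<Rightarrow> int poly" where "mD D = [:- tD D, - sD D, 1:]"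
definition emb :: "qelt \<Rightarrow> int poly" where "emb x = [:fst x, snd x:]"
definition cnj :: "int \<Rightarrow> qelt \<Rightarrow> int poly" where "cnj D x = [:fst x + sD D * snd x, - snd x:]"
definition Yp :: "int \<Rightarrow> int poly" where "Yp D = [:- sD D, 2:]"
definition Dl :: "int \<Rightarrow> int" where "Dl D = sD D ^ 2 + 4 * tD D"

lemma mod_red: "cg n m [:a mod n, b mod n:] [:a, b:]"
proof -
  have "[:a mod n, b mod n:] - [:a, b:] = smult n [:- (a div n), - (b div n):]"
    by (simp add: minus_mod_eq_mult_div[symmetric] algebra_simps)
  then show ?thesis unfolding cg_def by (metis Inn_n)
qed

lemma mD_mult: "cg n (mD D) [:a*c + tD D * b * d, a*d + b*c + sD D * b*d:] ([:a,b:] * [:c,d:])"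
proof -
  have "[:a*c + tD D * b * d, a*d + b*c + sD D * b*d:] - ([:a,b:] * [:c,d:]) = mD D * [:- (b*d):]"
    by (simp add: mD_def algebra_simps)
  then show ?thesis unfolding cg_def by (metis Inn_m)
qed

lemma emb_qmul: "cg n (mD D) (emb (qmul D n x y)) (emb x * emb y)"
proof -
  obtain a b c d where xy: "x = (a,b)" "y = (c,d)" by (cases x, cases y) auto
  have "emb (qmul D n x y) = [:(a*c + tD D * b * d) mod n, (a*d + b*c + sD D * b*d) mod n:]"
  proof (cases "D mod 4 = 1")
    case True
    have "qmul D n x y = ((a*c + b*d*((D-1) div 4)) mod n, (a*d+b*c+b*d) mod n)"
      using True by (simp add: xy qmul_def)
    moreover have "tD D * b * d = b*d*((D-1) div 4)" "sD D * b * d = b * d"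
      using True by (simp_all add: tD_def sD_def)
    ultimately show ?thesis by (simp only: emb_def fst_conv snd_conv)
  next
    case False
    have "qmul D n x y = ((a*c + D*b*d) mod n, (a*d+b*c) mod n)"
      using False by (simp add: xy qmul_def)
    moreover have "tD D * b * d = D*b*d" "sD D * b * d = 0"
      using False by (simp_all add: tD_def sD_def)
    ultimately show ?thesis by (simp only: emb_def fst_conv snd_conv add_0_right)
  qed
  moreover have "emb x * emb y = [:a,b:] * [:c,d:]" by (simp add: xy emb_def)
  ultimately show ?thesis using cg_trans[OF mod_red mD_mult] by simp
qed

lemma emb_qpow: "cg n (mD D) (emb (qpow D n x e)) (emb x ^ e)"
proof (induction e)
  case 0
  then show ?case using mod_red[of n "mD D" 1 0] by (simp add: emb_def one_pCons)
next
  case (Suc e)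
  have "cg n (mD D) (emb (qmul D n x (qpow D n x e))) (emb x * emb x ^ e)"
    by (rule cg_trans[OF emb_qmul cg_mult[OF cg_refl Suc.IH]])
  then show ?case by simp
qed

lemma qnorm_eq: "qnorm D x = fst x ^ 2 + sD D * fst x * snd x - tD D * snd x ^ 2"
proof -
  have "D mod 4 = 1 \<Longrightarrow> (1 - D) div 4 = - ((D - 1) div 4)" by presburger
  then show ?thesis by (cases x, cases "D mod 4 = 1") (simp_all add: qnorm_def sD_def tD_def)
qed


lemma norm_cnj: "cg n (mD D) (emb x * cnj D x) [:qnorm D x:]"
proof -
  have "emb x * cnj D x - [:qnorm D x:] = mD D * [:- (snd x ^ 2):]"
    by (simp add: qnorm_eq emb_def cnj_def mD_def algebra_simps power2_eq_square)
  then show ?thesis unfolding cg_def by (metis Inn_m)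
qed


lemma Y_sq: "cg n (mD D) (Yp D ^ 2) [:Dl D:]"
proof -
  have "Yp D ^ 2 - [:Dl D:] = mD D * [:4:]"
    by (simp add: Yp_def Dl_def mD_def algebra_simps power2_eq_square)
  then show ?thesis unfolding cg_def by (metis Inn_m)
qed


lemma Dl_eq: "Dl D = (if D mod 4 = 1 then D else 4 * D)"
proof -
  have "D mod 4 = 1 \<Longrightarrow> 1 + 4 * ((D - 1) div 4) = D" by presburger
  then show ?thesis by (simp add: Dl_def sD_def tD_def)
qed


lemma two_emb: "smult 2 (emb x) = [:2 * fst x + snd x * sD D:] + smult (snd x) (Yp D)"
  by (simp add: emb_def Yp_def algebra_simps)


lemma two_cnj: "smult 2 (cnj D x) = [:2 * fst x + snd x * sD D:] - smult (snd x) (Yp D)"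
  by (simp add: cnj_def Yp_def algebra_simps)

lemma fermat_int:
  fixes a :: int and q :: nat
  assumes q: "prime q"
  shows "[a ^ q = a] (mod int q)"
proof (cases "int q dvd a")
  case True
  have "q > 0" using q prime_gt_0_nat by blast
  then have "int q dvd a ^ q" using True by (metis dvd_power dvd_trans)
  then show ?thesis using True by (simp add: cong_iff_dvd_diff)
next
  case False
  define a' where "a' = nat (a mod int q)"
  have q0: "int q > 0" using q prime_gt_0_nat by simp
  have aa: "int a' = a mod int q" unfolding a'_def using q0 by simp
  have "\<not> q dvd a'"
  proof
    assume "q dvd a'"
    then have "int q dvd a mod int q" using aa by (metis of_nat_dvd_iff)
    then show False using False by (simp add: dvd_mod_iff)
  qed
  then have "[a' ^ (q - 1) = 1] (mod q)" using fermat_theorem q by blast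
  then have "[a' ^ (q - 1) * a' = 1 * a'] (mod q)" by (rule cong_mult) simp
  then have "[a' ^ q = a'] (mod q)" using q
    by (metis One_nat_def Suc_pred mult.commute mult_1 power_Suc prime_gt_0_nat)
  then have "[int a' ^ q = int a'] (mod int q)" by (metis cong_int_iff of_nat_power)
  moreover have "[a = int a'] (mod int q)" using aa by (simp add: cong_def)
  ultimately show ?thesis by (meson cong_pow cong_sym cong_trans)
qed


lemma freshman:
  fixes q :: nat and f g :: "int poly"
  assumes q: "prime q"
  shows "cg (int q) m ((f + g) ^ q) (f ^ q + g ^ q)"
proof -
  have q0: "q > 0" using q prime_gt_0_nat by blast
  have bin: "(f + g) ^ q = (\<Sum>k\<le>q. of_nat (q choose k) * f ^ k * g ^ (q - k))"
    by (rule binomial_ring)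
  have t: "cg (int q) m (of_nat (q choose k) * f ^ k * g ^ (q - k))
      ((if k = q then f ^ q else 0) + (if k = 0 then g ^ q else 0))" if k: "k \<in> {..q}" for k
  proof (cases "k = 0 \<or> k = q")
    case True
    then show ?thesis using q0 by auto
  next
    case False
    then have "q dvd (q choose k)" using k q q0 by (intro dvd_choose_prime) auto
    then obtain c where c: "q choose k = q * c" by blast
    have "of_nat (q choose k) * f ^ k * g ^ (q - k) = smult (int q) (of_nat c * f ^ k * g ^ (q - k))"
      unfolding c by (simp add: of_nat_poly)
    then show ?thesis using False unfolding cg_def by (simp add: Inn_n)
  qed
  have "cg (int q) m ((f + g) ^ q) (\<Sum>k\<le>q. (if k = q then f ^ q else 0) + (if k = 0 then g ^ q else 0))"
    unfolding bin by (rule cg_sum) (rule t)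
  moreover have "(\<Sum>k\<le>q. (if k = q then f ^ q else 0) + (if k = 0 then g ^ q else 0)) = f ^ q + g ^ q"
    by (simp add: sum.distrib)
  ultimately show ?thesis by simp
qed

lemma cg_const_dvd: "n dvd c \<Longrightarrow> cg n m (smult c f) 0"
  unfolding cg_def by (metis Inn_n diff_zero dvd_def smult_smult)

lemma Y_pow:
  fixes q :: nat
  assumes q: "prime q" "odd q"
  shows "cg (int q) (mD D) (Yp D ^ q) (smult (Legendre D (int q)) (Yp D))"
proof -
  have q2: "q > 2" using q by (metis prime_ge_2_nat le_neq_implies_less even_numeral)
  define r where "r = (q - 1) div 2"
  have qr: "q = Suc (2 * r)" using q q2 unfolding r_def by presburger
  have "Yp D ^ q = Yp D * (Yp D ^ 2) ^ r" unfolding qr by (simp add: power_mult)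
  moreover have "cg (int q) (mD D) (Yp D * (Yp D ^ 2) ^ r) (Yp D * [:Dl D ^ r:])"
    by (intro cg_mult cg_refl) (metis cg_power Y_sq poly_const_pow)
  moreover have "[Dl D ^ r = Legendre D (int q)] (mod int q)"
  proof -
    have e: "[Legendre D (int q) = D ^ r] (mod int q)"
      unfolding r_def by (rule euler_criterion[OF q(1) q2])
    show ?thesis
    proof (cases "D mod 4 = 1")
      case True
      then show ?thesis using e Dl_eq by (simp add: cong_sym)
    next
      case False
      have "[(4::int) ^ r = 1] (mod int q)"
      proof -
        have "(4::int) ^ r = 2 ^ (q - 1)" unfolding qr by (simp add: power_mult)
        moreover have "[(2::int) ^ (q - 1) = 1] (mod int q)"
        proof -
          have "\<not> q dvd 2" using q2 by (metis nat_dvd_not_less zero_less_numeral dvd_antisym dvd_refl less_irrefl le_less)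
          then have "[2 ^ (q - 1) = (1::nat)] (mod q)" using fermat_theorem q(1) by blast
          then show ?thesis by (metis cong_int_iff of_nat_numeral of_nat_1 of_nat_power)
        qed
        ultimately show ?thesis by simp
      qed
      then have "[4 ^ r * D ^ r = 1 * Legendre D (int q)] (mod int q)"
        using e by (intro cong_mult) (auto simp: cong_sym)
      then show ?thesis using False Dl_eq by (simp add: power_mult_distrib)
    qed
  qed
  then have "cg (int q) (mD D) (Yp D * [:Dl D ^ r:]) (Yp D * [:Legendre D (int q):])"
    by (intro cg_mult cg_refl cg_const)
  moreover have "Yp D * [:Legendre D (int q):] = smult (Legendre D (int q)) (Yp D)" by simp
  ultimately show ?thesis by (metis cg_trans)
qed

lemma cg_smult_cong: "[c = d] (mod n) \<Longrightarrow> cg n m (smult c f) (smult d f)"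
proof -
  assume "[c = d] (mod n)"
  then have "n dvd c - d" by (simp add: cong_iff_dvd_diff)
  then have "cg n m (smult (c - d) f) 0" by (rule cg_const_dvd)
  then show ?thesis unfolding cg_def by (simp add: smult_diff_left)
qed

lemma cg_cancel:
  assumes "coprime c n" "cg n m (smult c f) (smult c g)"
  shows "cg n m f g"
proof -
  obtain h where h: "[c * h = 1] (mod n)" using cong_solve_coprime_int assms(1) by blast
  have "cg n m (smult h (smult c f)) (smult h (smult c g))" using assms(2) by (rule cg_smult)
  then have "cg n m (smult (c * h) f) (smult (c * h) g)" by (simp add: mult.commute)
  moreover have "cg n m (smult (c * h) f) f" "cg n m (smult (c * h) g) g"
    using cg_smult_cong[OF h] by simp_all
  ultimately show ?thesis by (meson cg_sym cg_trans)
qed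

lemma frob:
  fixes q :: nat
  assumes q: "prime q" "odd q"
  shows "cg (int q) (mD D) (smult 2 (emb x ^ q))
           ([:2 * fst x + snd x * sD D:] + smult (snd x * Legendre D (int q)) (Yp D))"
proof -
  define c where "c = 2 * fst x + snd x * sD D"
  define b where "b = snd x"
  define L where "L = Legendre D (int q)"
  have "smult (2 ^ q) (emb x ^ q) = (smult 2 (emb x)) ^ q" by (simp add: smult_power)
  also have "\<dots> = ([:c:] + smult b (Yp D)) ^ q" unfolding c_def b_def using two_emb[of x D] by metis
  finally have e1: "smult (2 ^ q) (emb x ^ q) = ([:c:] + smult b (Yp D)) ^ q" .
  have "cg (int q) (mD D) (([:c:] + smult b (Yp D)) ^ q) ([:c:] ^ q + (smult b (Yp D)) ^ q)"
    by (rule freshman[OF q(1)])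
  moreover have "[:c:] ^ q = [:c ^ q:]" by (simp add: poly_const_pow)
  moreover have "cg (int q) (mD D) [:c ^ q:] [:c:]" by (rule cg_const[OF fermat_int[OF q(1)]])
  moreover have "(smult b (Yp D)) ^ q = smult (b ^ q) (Yp D ^ q)" by (simp add: smult_power)
  moreover have "cg (int q) (mD D) (smult (b ^ q) (Yp D ^ q)) (smult (b ^ q) (smult L (Yp D)))"
    unfolding L_def by (rule cg_smult[OF Y_pow[OF q]])
  moreover have "cg (int q) (mD D) (smult (b ^ q * L) (Yp D)) (smult (b * L) (Yp D))"
    by (rule cg_smult_cong) (intro cong_mult fermat_int[OF q(1)] cong_refl)
  moreover have "cg (int q) (mD D) (smult 2 (emb x ^ q)) (smult (2 ^ q) (emb x ^ q))"
    by (rule cg_smult_cong) (rule cong_sym[OF fermat_int[OF q(1)]])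
  ultimately have "cg (int q) (mD D) (smult 2 (emb x ^ q)) ([:c:] + smult (b * L) (Yp D))"
    using e1 by (metis (no_types, lifting) cg_add cg_trans smult_smult)
  then show ?thesis unfolding c_def b_def L_def .
qed

lemma coprime2: "odd q \<Longrightarrow> coprime (2::int) (int q)"
  by simp

lemma frob_m1:
  fixes q :: nat
  assumes q: "prime q" "odd q" and L: "Legendre D (int q) = -1"
    and nx: "[qnorm D x = 1] (mod int q)"
  shows "cg (int q) (mD D) (emb x ^ Suc q) 1"
proof -
  have f: "cg (int q) (mD D) (smult 2 (emb x ^ q))
           ([:2 * fst x + snd x * sD D:] + smult (snd x * -1) (Yp D))"
    using frob[OF q, of D x] unfolding L .
  have "[:2 * fst x + snd x * sD D:] + smult (snd x * -1) (Yp D) = smult 2 (cnj D x)"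
    unfolding two_cnj by simp
  then have "cg (int q) (mD D) (smult 2 (emb x ^ q)) (smult 2 (cnj D x))" using f by simp
  then have "cg (int q) (mD D) (emb x ^ q) (cnj D x)" by (rule cg_cancel[OF coprime2[OF q(2)]])
  then have a: "cg (int q) (mD D) (emb x * emb x ^ q) (emb x * cnj D x)" by (intro cg_mult cg_refl)
  have b: "cg (int q) (mD D) [:qnorm D x:] [:1:]" by (rule cg_const[OF nx])
  have "cg (int q) (mD D) (emb x * emb x ^ q) [:1:]"
    by (rule cg_trans[OF cg_trans[OF a norm_cnj] b])
  then show ?thesis by (simp add: one_pCons)
qed

lemma frob_1:
  fixes q :: nat
  assumes q: "prime q" "odd q" and L: "Legendre D (int q) = 1"
  shows "cg (int q) (mD D) (emb x ^ q) (emb x)"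
proof -
  have f: "cg (int q) (mD D) (smult 2 (emb x ^ q))
           ([:2 * fst x + snd x * sD D:] + smult (snd x * 1) (Yp D))"
    using frob[OF q, of D x] unfolding L .
  have "[:2 * fst x + snd x * sD D:] + smult (snd x * 1) (Yp D) = smult 2 (emb x)"
    unfolding two_emb[of x D] by simp
  then have "cg (int q) (mD D) (smult 2 (emb x ^ q)) (smult 2 (emb x))" using f by simp
  then show ?thesis by (rule cg_cancel[OF coprime2[OF q(2)]])
qed

lemma four_coprime: "odd q \<Longrightarrow> coprime (4::int) (int q)"
proof -
  assume "odd q"
  then have "coprime (2 * 2::int) (int q)" using coprime2 coprime_mult_left_iff by blast
  then show ?thesis by simp
qed

lemma frob_0:
  fixes q :: nat
  assumes q: "prime q" "odd q" and L: "Legendre D (int q) = 0"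
    and nx: "[qnorm D x = 1] (mod int q)"
  shows "cg (int q) (mD D) (emb x ^ (2 * q)) 1"
proof -
  define c where "c = 2 * fst x + snd x * sD D"
  have f: "cg (int q) (mD D) (smult 2 (emb x ^ q))
           ([:2 * fst x + snd x * sD D:] + smult (snd x * 0) (Yp D))"
    using frob[OF q, of D x] unfolding L .
  then have "cg (int q) (mD D) (smult 2 (emb x ^ q)) [:c:]"
    unfolding c_def by simp
  then have a: "cg (int q) (mD D) (smult 2 (emb x ^ q) ^ 2) ([:c:] ^ 2)" by (rule cg_power)
  have e1: "smult 2 (emb x ^ q) ^ 2 = smult 4 (emb x ^ (2 * q))"
    by (simp add: smult_power power_mult[symmetric] mult.commute)
  have e2: "[:c:] ^ 2 = [:c ^ 2:]" by (simp add: poly_const_pow)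
  have "[c ^ 2 = 4] (mod int q)"
  proof -
    have c2: "c ^ 2 = 4 * qnorm D x + snd x ^ 2 * Dl D"
      unfolding c_def qnorm_eq Dl_def by (simp add: algebra_simps power2_eq_square)
    have "int q dvd Dl D"
    proof -
      have "[D = 0] (mod int q)" using L unfolding Legendre_def by (auto split: if_splits)
      then have "int q dvd D" by (simp add: cong_0_iff)
      then show ?thesis using Dl_eq by simp
    qed
    then have z: "[snd x ^ 2 * Dl D = 0] (mod int q)" by (simp add: cong_0_iff)
    have "[4 * qnorm D x = 4 * 1] (mod int q)" using nx by (intro cong_mult cong_refl)
    from cong_add[OF this z] show ?thesis unfolding c2 by simp
  qed
  then have b: "cg (int q) (mD D) [:c ^ 2:] (smult 4 1)" using cg_const by (simp add: one_pCons)
  have "cg (int q) (mD D) (smult 4 (emb x ^ (2 * q))) (smult 4 1)"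
    using cg_trans[OF a[unfolded e1 e2] b] .
  then show ?thesis by (rule cg_cancel[OF four_coprime[OF q(2)]])
qed

lemma Inn_lin: "n dvd a \<Longrightarrow> n dvd b \<Longrightarrow> Inn n m [:a, b:]"
proof -
  assume "n dvd a" "n dvd b"
  then obtain k1 k2 where "a = n * k1" "b = n * k2" by (auto elim!: dvdE)
  then have "[:a, b:] = smult n [:k1, k2:]" by simp
  then show ?thesis by (metis Inn_n)
qed

lemma qeq_iff:
  assumes "n > 0"
  shows "qeq n x y \<longleftrightarrow> cg n (mD D) (emb x) (emb y)"
proof -
  have e: "emb x - emb y = [:fst x - fst y, snd x - snd y:]" by (simp add: emb_def)
  show ?thesis
  proof
    assume "qeq n x y"
    then show "cg n (mD D) (emb x) (emb y)" unfolding cg_def e qeq_def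
      by (intro Inn_lin) (simp_all add: cong_iff_dvd_diff)
  next
    assume "cg n (mD D) (emb x) (emb y)"
    then have "Inn n [:- tD D, - sD D, 1:] [:fst x - fst y, snd x - snd y:]"
      unfolding cg_def e mD_def .
    from coeff_lemma[OF assms this] show "qeq n x y"
      unfolding qeq_def by (simp add: cong_iff_dvd_diff)
  qed
qed

lemma emb_qadd: "cg n m (emb (qadd n x y)) (emb x + emb y)"
  unfolding qadd_def emb_def using mod_red by simp

lemma emb_fold: "cg n m (emb (foldr (qadd n) xs (0, 0))) (sum_list (map emb xs))"
proof (induction xs)
  case Nil
  then show ?case by (simp add: emb_def)
next
  case (Cons x xs)
  have a: "cg n m (emb (qadd n x (foldr (qadd n) xs (0, 0)))) (emb x + emb (foldr (qadd n) xs (0, 0)))"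
    by (rule emb_qadd)
  have b: "cg n m (emb x + emb (foldr (qadd n) xs (0, 0))) (emb x + sum_list (map emb xs))"
    by (intro cg_add cg_refl Cons.IH)
  show ?case using cg_trans[OF a b] by simp
qed



lemma cyclo_emb: "cg n (mD D) (emb (cyclo_prime_eval D n p u)) (\<Sum>i<p. emb u ^ i)"
proof -
  have a: "cg n (mD D) (emb (cyclo_prime_eval D n p u)) (\<Sum>i<p. emb (qpow D n u i))"
    using emb_fold[of n "mD D" "map (qpow D n u) [0..<p]"]
    unfolding cyclo_prime_eval_def by (simp add: interv_sum_list_conv_sum_set_nat atLeast_upt[symmetric] lessThan_atLeast0 o_def)
  have b: "cg n (mD D) (\<Sum>i<p. emb (qpow D n u i)) (\<Sum>i<p. emb u ^ i)"
    by (intro cg_sum emb_qpow)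
  show ?thesis using cg_trans[OF a b] .
qed


lemma cg_pow_dvd: "cg n m (W ^ g) 1 \<Longrightarrow> g dvd k \<Longrightarrow> cg n m (W ^ k) 1"
proof -
  assume a: "cg n m (W ^ g) 1" "g dvd k"
  then obtain j where "k = g * j" by blast
  then have "W ^ k = (W ^ g) ^ j" by (simp add: power_mult)
  then show ?thesis using cg_power[OF a(1), of j] by simp
qed


lemma cg_pow_gcd:
  assumes "cg n m (W ^ a) 1" "cg n m (W ^ b) 1" "a \<noteq> 0"
  shows "cg n m (W ^ gcd a b) 1"
proof -
  obtain x y where xy: "a * x = b * y + gcd a b" using bezout_nat[OF assms(3)] by blast
  have "W ^ (a * x) = W ^ (b * y) * W ^ gcd a b" by (simp add: xy power_add)
  moreover have "cg n m (W ^ (a * x)) 1" using cg_pow_dvd[OF assms(1)] by simp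
  moreover have "cg n m (W ^ (b * y) * W ^ gcd a b) (1 * W ^ gcd a b)"
    using cg_pow_dvd[OF assms(2)] by (intro cg_mult cg_refl) simp
  ultimately show ?thesis by (metis cg_sym cg_trans mult_1)
qed


lemma NT1:
  fixes p a g l :: nat
  assumes p: "prime p" and g: "g dvd a * p ^ l" and a: "a > 0" and cop: "coprime a p"
    and np: "\<not> p ^ l dvd g"
  shows "g dvd a * p ^ (l - 1)"
proof -
  have "a * p ^ l \<noteq> 0" using a p prime_gt_0_nat by simp
  then have g0: "g \<noteq> 0" using g by (metis dvd_0_left)
  have nu: "\<not> is_unit p" using p not_prime_unit by blast
  obtain y where y: "g = p ^ multiplicity p g * y" "\<not> p dvd y"
    using multiplicity_decompose'[OF g0 nu] by blast
  have "coprime p y" using y(2) by (rule prime_imp_coprime[OF p])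
  then have "coprime y p" by (rule coprime_commute[THEN iffD1])
  then have cy: "coprime y (p ^ l)" by simp
  have "y dvd g" using y(1) by (metis dvd_triv_right)
  then have "y dvd a * p ^ l" using g by (rule dvd_trans)
  then have ya: "y dvd a" using cy by (simp add: coprime_dvd_mult_left_iff)
  have "multiplicity p g < l"
  proof (rule ccontr)
    assume "\<not> multiplicity p g < l"
    then have "p ^ l dvd p ^ multiplicity p g" by (simp add: le_imp_power_dvd)
    moreover have "p ^ multiplicity p g dvd g" using y(1) by (metis dvd_triv_left)
    ultimately show False using np dvd_trans by blast
  qed
  then have "p ^ multiplicity p g dvd p ^ (l - 1)" by (simp add: le_imp_power_dvd)
  then have "p ^ multiplicity p g * y dvd p ^ (l - 1) * a" using ya by (rule mult_dvd_mono)
  then have "g dvd p ^ (l - 1) * a" using y(1) by metis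
  then show ?thesis by (simp add: mult.commute)
qed


lemma NT2:
  fixes p q P :: nat
  assumes "odd P" "P > 1" "odd q" "q \<ge> 2" and d: "P dvd q + 1 \<or> P dvd q - 1"
  shows "q \<ge> P + 1"
  using d
proof
  assume "P dvd q + 1"
  then obtain j where j: "q + 1 = P * j" by blast
  show ?thesis
  proof (cases "j \<le> 1")
    case True
    then have "j = 1" using j by (cases j) auto
    then show ?thesis using j assms by auto
  next
    case False
    then have "P * j \<ge> P * 2" by simp
    then show ?thesis using j assms by linarith
  qed
next
  assume "P dvd q - 1"
  then obtain j where j: "q - 1 = P * j" by blast
  then have "j \<ge> 1" using assms by (cases j) auto
  then have "P * j \<ge> P" by simp
  then show ?thesis using j assms by linarith
qed


lemma NT3:
  fixes Nn P a :: nat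
  assumes "Nn \<ge> 2" and f: "\<And>q. prime q \<Longrightarrow> q dvd Nn \<Longrightarrow> q \<ge> P + 1"
    and e: "Nn + 1 = a * P" and "a < P"
  shows "prime Nn"
proof (rule ccontr)
  assume np: "\<not> prime Nn"
  obtain q where q: "prime q" "q dvd Nn" using prime_factor_nat[of Nn] assms(1) by auto
  then obtain r where r: "Nn = q * r" by blast
  have "r \<noteq> 1" using np r q by auto
  moreover have "r \<noteq> 0" using r assms(1) by (metis mult_0_right not_numeral_le_zero)
  ultimately obtain q' where q': "prime q'" "q' dvd r" using prime_factor_nat[of r] by auto
  have "r \<ge> q'" using dvd_imp_le[OF q'(2)] \<open>r \<noteq> 0\<close> by simp
  moreover have "q' dvd Nn" using q'(2) r by simp
  then have "q' \<ge> P + 1" using f q'(1) by blast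
  ultimately have "r \<ge> P + 1" by linarith
  moreover have "q \<ge> P + 1" using f q by blast
  ultimately have "q * r \<ge> (P + 1) * (P + 1)" using mult_le_mono by blast
  then have "Nn \<ge> (P + 1) * (P + 1)" using r by simp
  moreover have "a * P \<le> P * P" using assms(4) by (simp add: mult_le_mono1 less_imp_le)
  moreover have "(P + 1) * (P + 1) = P * P + 2 * P + 1" by (simp add: algebra_simps)
  ultimately show False using e by linarith
qed

lemma c_sq: "(2 * fst x + snd x * sD D) ^ 2 = 4 * qnorm D x + snd x ^ 2 * Dl D"
  unfolding qnorm_eq Dl_def by (simp add: algebra_simps power2_eq_square)

lemma nonres_norm:
  fixes Nn :: nat
  assumes q: "prime Nn" "odd Nn" and L: "Legendre D (int Nn) = -1"
    and nz: "\<not> (int Nn dvd fst x \<and> int Nn dvd snd x)"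
  shows "\<not> int Nn dvd qnorm D x"
proof
  define n where "n = int Nn"
  define c where "c = 2 * fst x + snd x * sD D"
  have pn: "prime n" using q unfolding n_def by simp
  have on: "odd n" using q(2) unfolding n_def by simp
  have n2: "\<not> n dvd 2"
  proof
    assume "n dvd 2"
    then have "n \<le> 2" by (rule zdvd_imp_le) simp
    moreover have "n \<ge> 2" using pn by (rule prime_ge_2_int)
    ultimately have "n = 2" by simp
    then show False using on by simp
  qed
  assume "int Nn dvd qnorm D x"
  then have dn: "n dvd qnorm D x" unfolding n_def .
  have cs: "c ^ 2 = 4 * qnorm D x + snd x ^ 2 * Dl D" unfolding c_def by (rule c_sq)
  have cc: "[c ^ 2 = snd x ^ 2 * Dl D] (mod n)"
  proof -
    have "[4 * qnorm D x = 0] (mod n)" using dn by (simp add: cong_0_iff)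
    from cong_add[OF this cong_refl[of "snd x ^ 2 * Dl D"]] show ?thesis unfolding cs by simp
  qed
  show False
  proof (cases "n dvd snd x")
    case True
    then have "n dvd snd x ^ 2 * Dl D" by (simp add: power2_eq_square)
    then have "n dvd c ^ 2" using cong_dvd_iff[OF cc] by blast
    then have "n dvd c" using pn prime_dvd_power by blast
    moreover have "n dvd snd x * sD D" using True by simp
    ultimately have "n dvd c - snd x * sD D" by (rule dvd_diff)
    then have "n dvd 2 * fst x" unfolding c_def by simp
    then have "n dvd fst x" using pn n2 prime_dvd_mult_iff by blast
    then show False using nz True unfolding n_def by blast
  next
    case False
    then have "coprime n (snd x)" by (rule prime_imp_coprime[OF pn])
    then have "coprime (snd x) n" by (rule coprime_commute[THEN iffD1])
    then obtain b' where b': "[snd x * b' = 1] (mod n)" using cong_solve_coprime_int by blast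
    have e1: "(c * b') ^ 2 = c ^ 2 * b' ^ 2" by (simp add: power_mult_distrib)
    have e2: "snd x ^ 2 * Dl D * b' ^ 2 = (snd x * b') ^ 2 * Dl D" by (simp add: power_mult_distrib)
    have "[c ^ 2 * b' ^ 2 = snd x ^ 2 * Dl D * b' ^ 2] (mod n)"
      by (rule cong_mult[OF cc cong_refl])
    then have s1: "[(c * b') ^ 2 = (snd x * b') ^ 2 * Dl D] (mod n)" unfolding e1 e2 .
    have s2: "[(snd x * b') ^ 2 * Dl D = 1 ^ 2 * Dl D] (mod n)"
      using b' by (intro cong_mult cong_pow cong_refl)
    have qr: "[(c * b') ^ 2 = Dl D] (mod n)" using cong_trans[OF s1 s2] by simp
    have "QuadRes n D"
    proof (cases "D mod 4 = 1")
      case True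
      then have "Dl D = D" using Dl_eq by simp
      then show ?thesis using qr unfolding QuadRes_def by metis
    next
      case False
      then have dl: "Dl D = 4 * D" using Dl_eq by simp
      have "coprime n 2" using n2 by (rule prime_imp_coprime[OF pn])
      then have "coprime 2 n" by (rule coprime_commute[THEN iffD1])
      then obtain h where h: "[2 * h = 1] (mod n)" using cong_solve_coprime_int by blast
      have e3: "(c * b' * h) ^ 2 = (c * b') ^ 2 * h ^ 2" by (simp add: power_mult_distrib)
      have e4: "4 * D * h ^ 2 = (2 * h) ^ 2 * D" by (simp add: algebra_simps power2_eq_square)
      have "[(c * b') ^ 2 * h ^ 2 = 4 * D * h ^ 2] (mod n)"
        using cong_mult[OF qr cong_refl[of "h ^ 2"]] unfolding dl .
      then have s3: "[(c * b' * h) ^ 2 = (2 * h) ^ 2 * D] (mod n)" unfolding e3 e4 .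
      have s4: "[(2 * h) ^ 2 * D = 1 ^ 2 * D] (mod n)" using h by (intro cong_mult cong_pow cong_refl)
      have "[(c * b' * h) ^ 2 = D] (mod n)" using cong_trans[OF s3 s4] by simp
      then show ?thesis unfolding QuadRes_def by blast
    qed
    moreover have "\<not> [D = 0] (mod n)" using L unfolding Legendre_def n_def by (auto split: if_splits)
    ultimately have "Legendre D n = 1" unfolding Legendre_def by simp
    then show False using L unfolding n_def by simp
  qed
qed

lemma domain:
  fixes Nn :: nat
  assumes q: "prime Nn" "odd Nn" and L: "Legendre D (int Nn) = -1"
    and nz: "\<not> (int Nn dvd fst x \<and> int Nn dvd snd x)"
    and z: "cg (int Nn) (mD D) (emb x * z) 0"
  shows "cg (int Nn) (mD D) z 0"
proof -
  have nd: "\<not> int Nn dvd qnorm D x" by (rule nonres_norm[OF q L nz])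
  have pn: "prime (int Nn)" using q by simp
  have "coprime (int Nn) (qnorm D x)" using nd by (rule prime_imp_coprime[OF pn])
  then have cop: "coprime (qnorm D x) (int Nn)" by (rule coprime_commute[THEN iffD1])
  have "cg (int Nn) (mD D) (cnj D x * (emb x * z)) (cnj D x * 0)" by (intro cg_mult cg_refl z)
  then have a: "cg (int Nn) (mD D) ((emb x * cnj D x) * z) 0" by (simp add: ac_simps)
  have b: "cg (int Nn) (mD D) ((emb x * cnj D x) * z) ([:qnorm D x:] * z)"
    by (intro cg_mult cg_refl norm_cnj)
  have "cg (int Nn) (mD D) (smult (qnorm D x) z) (smult (qnorm D x) 0)"
    using cg_trans[OF cg_sym[OF b] a] by simp
  then show ?thesis by (rule cg_cancel[OF cop])
qed

theorem theorem1p1: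
  fixes D :: int and p k l c :: nat and N :: int and w :: qelt
  assumes "squarefree D"
    and "prime p" and "odd p"
    and "k > 0" and "l > 0" and "c > 0"
    and "coprime (c * k) p"
    and "N = int (c * k * p ^ l) - 1"
    and "odd N"
    and "c * k < p ^ l"
    and "Jacobi D (nat N) = -1"
    and "inG D N w"
    and "\<not> qeq N (qpow D N w (nat ((N + 1) div int p))) qone"
  shows "prime N \<longleftrightarrow>
           qeq N (cyclo_prime_eval D N p (qpow D N w (nat ((N + 1) div int p)))) qzero"
proof -
  note pp = assms(2) and op = assms(3) and k0 = assms(4) and l0 = assms(5) and c0 = assms(6)
    and cop = assms(7) and Ndef = assms(8) and oddN = assms(9) and ckl = assms(10)
    and jac = assms(11) and inGw = assms(12) and nq = assms(13)
  define M where "M = c * k * p ^ l"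
  define m0 where "m0 = c * k * p ^ (l - 1)"
  have pl: "p ^ l = p ^ (l - 1) * p" using power_minus_mult[OF l0, of p] by simp
  have Mm: "M = m0 * p" unfolding M_def m0_def pl by (simp add: mult.assoc)
  have p2: "p \<ge> 2" using pp by (rule prime_ge_2_nat)
  have p3: "p \<ge> 3" using p2 op by presburger
  have ck1: "c * k \<ge> 1" using c0 k0 by simp
  have "p \<le> p ^ l" using p2 l0 by (intro self_le_power) simp_all
  then have pl3: "p ^ l \<ge> 3" using p3 by linarith
  have "1 * 3 \<le> c * k * p ^ l" by (rule mult_le_mono[OF ck1 pl3])
  then have M3: "M \<ge> 3" unfolding M_def by simp
  define Nn where "Nn = nat N"
  have NM: "N = int M - 1" using Ndef unfolding M_def .
  have NNn: "N = int Nn" unfolding Nn_def using NM M3 by simp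
  have NnM: "Nn + 1 = M" using NM NNn by simp
  have Nn2: "Nn \<ge> 2" using NnM M3 by simp
  have oNn: "odd Nn" using oddN NNn by simp
  have N0: "N > 0" using NNn Nn2 by simp
  have e0: "nat ((N + 1) div int p) = m0"
  proof -
    have "N + 1 = int m0 * int p" using NM Mm by simp
    then show ?thesis using p2 by simp
  qed
  define u where "u = qpow D N w m0"
  define W where "W = emb w"
  define U where "U = emb u"
  define Phi where "Phi = (\<Sum>i<p. U ^ i)"
  have hU: "cg N (mD D) U (W ^ m0)" unfolding U_def W_def u_def by (rule emb_qpow)
  have hPhi: "cg N (mD D) (emb (cyclo_prime_eval D N p u)) Phi"
    unfolding Phi_def U_def by (rule cyclo_emb)
  have geom: "U ^ p - 1 = (U - 1) * Phi" unfolding Phi_def by (rule power_diff_1_eq)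
  have WM: "W ^ M = (W ^ m0) ^ p" unfolding Mm by (simp add: power_mult)
  have nrm: "[qnorm D w = 1] (mod N)" using inGw unfolding inG_def .
  have pnN: "\<not> p dvd Nn"
  proof
    assume "p dvd Nn"
    moreover have "p dvd Nn + 1" unfolding NnM Mm by simp
    ultimately have "p dvd 1" using dvd_add_right_iff by blast
    then show False using pp by simp
  qed
  have qeq0: "qeq N (cyclo_prime_eval D N p u) qzero \<longleftrightarrow> cg N (mD D) (emb (cyclo_prime_eval D N p u)) 0"
    using qeq_iff[OF N0, of _ _ D] by (simp add: qzero_def emb_def)
  have cgPhi: "cg N (mD D) (emb (cyclo_prime_eval D N p u)) 0 \<longleftrightarrow> cg N (mD D) Phi 0"
    using cg_trans[OF cg_sym[OF hPhi]] cg_trans[OF hPhi] by blast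
  show ?thesis unfolding e0 u_def[symmetric] qeq0 cgPhi
  proof
    assume "prime N"
    then have pN: "prime Nn" using NNn by simp
    have L: "Legendre D (int Nn) = -1"
      using jac unfolding Jacobi_def Nn_def[symmetric] using prime_factorization_prime[OF pN] by simp
    have nrm': "[qnorm D w = 1] (mod int Nn)" using nrm NNn by simp
    have "cg (int Nn) (mD D) (W ^ Suc Nn) 1" unfolding W_def by (rule frob_m1[OF pN oNn L nrm'])
    moreover have "W ^ Suc Nn = (W ^ m0) ^ p" using NnM WM by simp
    ultimately have a: "cg N (mD D) ((W ^ m0) ^ p) 1" using NNn by simp
    have "cg N (mD D) (U ^ p) ((W ^ m0) ^ p)" by (rule cg_power[OF hU])
    then have "cg N (mD D) (U ^ p) 1" using a cg_trans by blast
    then have b: "cg N (mD D) ((U - 1) * Phi) 0" unfolding cg_def geom[symmetric] by simp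
    have ue: "U - 1 = emb (fst u - 1, snd u)" unfolding U_def emb_def by (simp add: one_pCons)
    have nz: "\<not> (int Nn dvd fst (fst u - 1, snd u) \<and> int Nn dvd snd (fst u - 1, snd u))"
    proof -
      have "\<not> qeq N u qone" using nq unfolding e0 u_def .
      then show ?thesis unfolding qeq_def qone_def NNn by (simp add: cong_iff_dvd_diff)
    qed
    have "cg (int Nn) (mD D) (emb (fst u - 1, snd u) * Phi) 0" using b ue NNn by simp
    from domain[OF pN oNn L nz this] show "cg N (mD D) Phi 0" using NNn by simp
  next
    assume hP: "cg N (mD D) Phi 0"
    have "prime Nn"
    proof (rule NT3[OF Nn2 _ _ ckl])
      show "Nn + 1 = c * k * p ^ l" using NnM unfolding M_def .
    next
      fix q assume q: "prime q" "q dvd Nn"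
      have qN: "int q dvd N" using q(2) NNn by simp
      have oq: "odd q"
      proof
        assume "even q"
        then have "2 dvd Nn" using q(2) by (rule dvd_trans)
        with oNn show False by simp
      qed
      have q2: "q \<ge> 2" using q(1) by (rule prime_ge_2_nat)
      have qp: "q \<noteq> p" using q(2) pnN by blast
      have nrmq: "[qnorm D w = 1] (mod int q)" using nrm qN by (rule cong_dvd_modulus)
      have Pq: "cg (int q) (mD D) Phi 0" using hP qN by (rule cg_dvd)
      have hUq: "cg (int q) (mD D) U (W ^ m0)" using hU qN by (rule cg_dvd)
      have "cg (int q) (mD D) ((U - 1) * Phi) ((U - 1) * 0)" by (intro cg_mult cg_refl Pq)
      then have "cg (int q) (mD D) (U ^ p) 1" unfolding cg_def geom by simp
      moreover have "cg (int q) (mD D) ((W ^ m0) ^ p) (U ^ p)" by (rule cg_power[OF cg_sym[OF hUq]])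
      ultimately have WMq: "cg (int q) (mD D) (W ^ M) 1" unfolding WM using cg_trans by blast
      have Un1: "\<not> cg (int q) (mD D) (W ^ m0) 1"
      proof
        assume "cg (int q) (mD D) (W ^ m0) 1"
        then have "cg (int q) (mD D) U 1" using hUq cg_trans by blast
        then have "cg (int q) (mD D) Phi (\<Sum>i<p. 1 ^ i)" unfolding Phi_def by (intro cg_sum cg_power)
        then have "cg (int q) (mD D) (\<Sum>i<p. 1 ^ i) 0" using Pq by (meson cg_sym cg_trans)
        then have "Inn (int q) [:- tD D, - sD D, 1:] [:int p, 0:]"
          unfolding cg_def mD_def by (simp add: of_nat_poly)
        from coeff_lemma[OF _ this] have "int q dvd int p" using q2 by simp
        then have "q dvd p" by simp
        then have "q = p" using q(1) pp by (simp add: primes_dvd_imp_eq)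
        then show False using qp by simp
      qed
      have M0: "M \<noteq> 0" using M3 by simp
      have key: "p ^ l dvd e" if e: "cg (int q) (mD D) (W ^ e) 1" for e
      proof (rule ccontr)
        assume npe: "\<not> p ^ l dvd e"
        define g where "g = gcd M e"
        have Wg: "cg (int q) (mD D) (W ^ g) 1" unfolding g_def by (rule cg_pow_gcd[OF WMq e M0])
        have gM: "g dvd c * k * p ^ l" unfolding g_def M_def[symmetric] by simp
        have "g dvd e" unfolding g_def by (rule gcd_dvd2)
        then have "\<not> p ^ l dvd g" using npe dvd_trans by blast
        then have "g dvd c * k * p ^ (l - 1)" using NT1[OF pp gM _ cop] ck1 by simp
        then have "cg (int q) (mD D) (W ^ m0) 1" unfolding m0_def by (rule cg_pow_dvd[OF Wg])
        then show False using Un1 by simp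
      qed
      have "p ^ l dvd q + 1 \<or> p ^ l dvd q - 1"
      proof -
        consider "Legendre D (int q) = -1" | "Legendre D (int q) = 0" | "Legendre D (int q) = 1"
          unfolding Legendre_def by (cases "[D = 0] (mod int q)"; cases "QuadRes (int q) D") auto
        then show ?thesis
        proof cases
          case 1
          have "cg (int q) (mD D) (W ^ Suc q) 1" unfolding W_def by (rule frob_m1[OF q(1) oq 1 nrmq])
          then show ?thesis using key by simp
        next
          case 2
          have "cg (int q) (mD D) (W ^ (2 * q)) 1" unfolding W_def by (rule frob_0[OF q(1) oq 2 nrmq])
          then have "p ^ l dvd 2 * q" by (rule key)
          moreover have "p dvd p ^ l" using l0 by (simp add: dvd_power)
          ultimately have "p dvd 2 * q" using dvd_trans by blast
          moreover have "\<not> p dvd 2"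
          proof
            assume "p dvd 2"
            then have "p \<le> 2" by (rule dvd_imp_le) simp
            then show False using p3 by simp
          qed
          ultimately have "p dvd q" using pp prime_dvd_mult_iff by blast
          then have "p = q" using q(1) pp by (simp add: primes_dvd_imp_eq)
          then show ?thesis using qp by simp
        next
          case 3
          have f: "cg (int q) (mD D) (W ^ q) W" unfolding W_def by (rule frob_1[OF q(1) oq 3])
          have "W ^ (q - 1) * W ^ M = W ^ q * W ^ (M - 1)"
            using q2 M0 by (simp add: power_add[symmetric])
          moreover have "cg (int q) (mD D) (W ^ (q - 1) * W ^ M) (W ^ (q - 1) * 1)"
            by (intro cg_mult cg_refl WMq)
          moreover have "cg (int q) (mD D) (W ^ q * W ^ (M - 1)) (W * W ^ (M - 1))"
            by (intro cg_mult cg_refl f)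
          moreover have "W * W ^ (M - 1) = W ^ M" using M0 by (simp add: power_Suc[symmetric])
          ultimately have "cg (int q) (mD D) (W ^ (q - 1)) (W ^ M)"
            using cg_trans cg_sym by (metis mult_1_right)
          then have "cg (int q) (mD D) (W ^ (q - 1)) 1" using WMq by (rule cg_trans)
          then show ?thesis using key by simp
        qed
      qed
      moreover have "odd (p ^ l)" using op by simp
      moreover have "p ^ l > 1" using pl3 by simp
      ultimately show "q \<ge> p ^ l + 1" using NT2[of "p ^ l" q] oq q2 by blast
    qed
    then show "prime N" using NNn by simp
  qed
qed

end
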